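(* Let $M$ be a non-empty manifold of dimension $m$. Then every countable subset of $M$ is contained in an open subset of $M$ which is homeomorphic to $\mathbb{R}^m$. Consequently, every two points of $M$ may be joined by an arc.
   Context: A manifold is a connected Hausdorff topological space which is locally homeomorphic to some euclidean space $\mathbb{R}^m$ (manifolds have no boundary); by connectedness $m$ is an invariant of the (non-empty) manifold, called its dimension. An arc is a subspace homeomorphic to $[0,1]$. *)

theory Defs
  imports "HOL-Analysis.Analysis"
begin

definition manifold_of_dim :: "'a topology \<Rightarrow> nat \<Rightarrow> bool" where
  "manifold_of_dim M m \<longleftrightarrow>
     connected_space M \<and> Hausdorff_space M \<and>
     (\<forall>x \<in> topspace M. \<exists>U. openin M U \<and> x \<in> U \<and>
         subtopology M U homeomorphic_space Euclidean_space m)"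

definition arc_joining :: "'a topology \<Rightarrow> 'a \<Rightarrow> 'a \<Rightarrow> bool" where
  "arc_joining M x y \<longleftrightarrow>
     (\<exists>g. embedding_map (top_of_set {0..1::real}) M g \<and> g 0 = x \<and> g 1 = y)"

end

theory Submission
  imports Defs
begin


definition Nm :: "nat \<Rightarrow> (nat\<Rightarrow>real) \<Rightarrow> real" where "Nm m x = (\<Sum>i<m. \<bar>x i\<bar>)"

lemma Nm_nonneg: "Nm m x \<ge> 0" by (simp add: Nm_def sum_nonneg)
lemma Nm_comp: "i < m \<Longrightarrow> \<bar>x i\<bar> \<le> Nm m x"
  unfolding Nm_def by (rule member_le_sum) auto
lemma Nm_add: "Nm m (\<lambda>i. x i + y i) \<le> Nm m x + Nm m y"
  unfolding Nm_def sum.distrib[symmetric] by (rule sum_mono) (simp add: abs_triangle_ineq)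
lemma Nm_scale: "Nm m (\<lambda>i. c * x i) = \<bar>c\<bar> * Nm m x"
  unfolding Nm_def by (simp add: abs_mult sum_distrib_left)
lemma Nm_sym: "Nm m (\<lambda>i. x i - y i) = Nm m (\<lambda>i. y i - x i)"
  unfolding Nm_def by (simp add: abs_minus_commute)
lemma Nm_zero: "Nm m (\<lambda>i. 0) = 0" by (simp add: Nm_def)

lemma cm_proj: "continuous_map (Euclidean_space m) euclideanreal (\<lambda>x. x i)"
  unfolding Euclidean_space_def
  by (intro continuous_map_from_subtopology continuous_map_product_projection) auto

lemma cm_Nm: "continuous_map (Euclidean_space m) euclideanreal (\<lambda>x. Nm m (\<lambda>i. x i - a i))"
  unfolding Nm_def
  by (intro continuous_intros cm_proj) auto

lemma openin_ball: "openin (Euclidean_space m) {x\<in>topspace (Euclidean_space m). Nm m (\<lambda>i. x i - a i) < r}"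
  using openin_continuous_map_preimage[OF cm_Nm[of m a], of "{..<r}"] by simp

lemma openin_cube:
  assumes "openin (Euclidean_space m) V" "a \<in> V"
  shows "\<exists>r>0. \<forall>x\<in>topspace (Euclidean_space m). (\<forall>i<m. \<bar>x i - a i\<bar> < r) \<longrightarrow> x \<in> V"
proof -
  define E where "E = {x::nat\<Rightarrow>real. \<forall>i\<ge>m. x i = 0}"
  have tE: "topspace (Euclidean_space m) = E" by (simp add: topspace_Euclidean_space E_def)
  obtain T where T: "openin (powertop_real UNIV) T" "V = T \<inter> E"
    using assms(1) unfolding Euclidean_space_def E_def by (auto simp: openin_subtopology)
  have aE: "a \<in> E" "a \<in> T" using assms T by auto
  then obtain U where U: "finite {i. U i \<noteq> UNIV}" "\<And>i. open (U i)" "a \<in> Pi\<^sub>E UNIV U" "Pi\<^sub>E UNIV U \<subseteq> T"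
    using T(1) unfolding openin_product_topology_alt by fastforce
  define F where "F = {i. U i \<noteq> UNIV}"
  have "\<forall>i\<in>F. \<exists>e>0. ball (a i) e \<subseteq> U i"
    using U by (meson PiE_E UNIV_I openE)
  then obtain e where e: "\<And>i. i\<in>F \<Longrightarrow> e i > 0 \<and> ball (a i) (e i) \<subseteq> U i" by metis
  define r where "r = Min (insert 1 (e ` F))"
  have rpos: "r > 0" unfolding r_def using U(1) e F_def by (subst Min_gr_iff) auto
  have rle: "r \<le> e i" if "i \<in> F" for i unfolding r_def using U(1) F_def that by (intro Min_le) auto
  show ?thesis
  proof (rule exI[of _ r], intro conjI ballI impI rpos)
    fix x assume x: "x \<in> topspace (Euclidean_space m)" "\<forall>i<m. \<bar>x i - a i\<bar> < r"
    have "x i \<in> U i" for i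
    proof (cases "i \<in> F")
      case True
      show ?thesis
      proof (cases "i < m")
        case True
        then have "\<bar>x i - a i\<bar> < e i" using x rle \<open>i\<in>F\<close> by fastforce
        then show ?thesis using e[OF \<open>i\<in>F\<close>] by (auto simp: dist_real_def)
      next
        case False
        then have "x i = a i" using x aE tE E_def by auto
        then show ?thesis using U(3) by auto
      qed
    next
      case False then show ?thesis by (simp add: F_def)
    qed
    then have "x \<in> T" using U(4) by auto
    then show "x \<in> V" using T x tE by auto
  qed
qed

lemma compact_cube:
  assumes "r \<ge> 0"
  shows "compactin (Euclidean_space m) {x\<in>topspace (Euclidean_space m). \<forall>i<m. \<bar>x i - a i\<bar> \<le> r}"
proof -
  define S where "S = (\<lambda>i. if i < m then {a i - r..a i + r} else {0::real})"
  have eq: "{x\<in>topspace (Euclidean_space m). \<forall>i<m. \<bar>x i - a i\<bar> \<le> r} = Pi\<^sub>E UNIV S"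
  proof (rule set_eqI)
    fix x :: "nat \<Rightarrow> real"
    have "x \<in> Pi\<^sub>E UNIV S \<longleftrightarrow> (\<forall>i. x i \<in> S i)" by (simp add: PiE_UNIV_domain Pi_def)
    also have "\<dots> \<longleftrightarrow> (\<forall>i\<ge>m. x i = 0) \<and> (\<forall>i<m. \<bar>x i - a i\<bar> \<le> r)"
      unfolding S_def by (auto simp: abs_le_iff not_less)
    finally show "x \<in> {x\<in>topspace (Euclidean_space m). \<forall>i<m. \<bar>x i - a i\<bar> \<le> r} \<longleftrightarrow> x \<in> Pi\<^sub>E UNIV S"
      by (simp add: topspace_Euclidean_space)
  qed
  have "compactin (powertop_real UNIV) (Pi\<^sub>E UNIV S)"
    by (subst compactin_PiE) (auto simp: S_def)
  then have "compactin (powertop_real UNIV) {x. (\<forall>i\<ge>m. x i = 0) \<and> (\<forall>i<m. \<bar>x i - a i\<bar> \<le> r)}"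
    unfolding eq[symmetric] by (simp add: topspace_Euclidean_space)
  then show ?thesis
    by (simp add: Euclidean_space_def compactin_subtopology topspace_Euclidean_space) auto
qed

definition dN :: "nat \<Rightarrow> (nat\<Rightarrow>real) \<Rightarrow> (nat\<Rightarrow>real) \<Rightarrow> real" where
  "dN m x y = Nm m (\<lambda>i. x i - y i)"

lemma dN_nonneg: "dN m x y \<ge> 0" by (simp add: dN_def Nm_nonneg)
lemma dN_sym: "dN m x y = dN m y x" unfolding dN_def by (rule Nm_sym)
lemma dN_self: "dN m x x = 0" by (simp add: dN_def Nm_def)
lemma dN_tri: "dN m x z \<le> dN m x y + dN m y z"
proof -
  have "dN m x z = Nm m (\<lambda>i. (x i - y i) + (y i - z i))" by (simp add: dN_def)
  also have "\<dots> \<le> dN m x y + dN m y z" unfolding dN_def by (rule Nm_add)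
  finally show ?thesis .
qed
lemma dN_comp: "i < m \<Longrightarrow> \<bar>x i - y i\<bar> \<le> dN m x y"
  unfolding dN_def by (rule Nm_comp)

lemma lipschitz_cm:
  assumes gE: "\<And>x. x \<in> topspace (Euclidean_space m) \<Longrightarrow> g x \<in> topspace (Euclidean_space m)"
    and C: "C > 0"
    and L: "\<And>x y. x \<in> topspace (Euclidean_space m) \<Longrightarrow> y \<in> topspace (Euclidean_space m) \<Longrightarrow>
              dN m (g x) (g y) \<le> C * dN m x y"
  shows "continuous_map (Euclidean_space m) (Euclidean_space m) g"
  unfolding continuous_map_def
proof (intro conjI allI impI)
  show "g \<in> topspace (Euclidean_space m) \<rightarrow> topspace (Euclidean_space m)" using gE by auto
  fix U assume U: "openin (Euclidean_space m) U"
  show "openin (Euclidean_space m) {x \<in> topspace (Euclidean_space m). g x \<in> U}"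
  proof (subst openin_subopen, intro ballI)
    fix x assume x: "x \<in> {x \<in> topspace (Euclidean_space m). g x \<in> U}"
    then obtain r where r: "r > 0" "\<forall>z\<in>topspace (Euclidean_space m). (\<forall>i<m. \<bar>z i - g x i\<bar> < r) \<longrightarrow> z \<in> U"
      using openin_cube[OF U, of "g x"] by auto
    define T where "T = {z\<in>topspace (Euclidean_space m). dN m z x < r / C}"
    have "openin (Euclidean_space m) T" unfolding T_def dN_def by (rule openin_ball)
    moreover have "x \<in> T" using x r C by (simp add: T_def dN_self)
    moreover have "T \<subseteq> {x \<in> topspace (Euclidean_space m). g x \<in> U}"
    proof
      fix z assume z: "z \<in> T"
      then have zE: "z \<in> topspace (Euclidean_space m)" by (simp add: T_def)
      have "dN m (g z) (g x) \<le> C * dN m z x" using L zE x by auto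
      also have "\<dots> < r" using z C by (simp add: T_def field_simps)
      finally have "\<forall>i<m. \<bar>g z i - g x i\<bar> < r" using dN_comp by (meson le_less_trans)
      then show "z \<in> {x \<in> topspace (Euclidean_space m). g x \<in> U}" using r gE zE by auto
    qed
    ultimately show "\<exists>T. openin (Euclidean_space m) T \<and> x \<in> T \<and> T \<subseteq> {x \<in> topspace (Euclidean_space m). g x \<in> U}"
      by blast
  qed
qed

lemma move_pt:
  assumes aE: "a \<in> topspace (Euclidean_space m)" and qE: "q \<in> topspace (Euclidean_space m)"
    and r: "r > 0" and qa: "dN m q a < r"
  shows "\<exists>\<psi> \<psi>'. homeomorphic_maps (Euclidean_space m) (Euclidean_space m) \<psi> \<psi>' \<and> \<psi> a = q \<and>
            (\<forall>x\<in>topspace (Euclidean_space m). dN m x a \<ge> r \<longrightarrow> \<psi> x = x \<and> \<psi>' x = x)"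
proof -
  define E where "E = topspace (Euclidean_space m)"
  define d where "d = (\<lambda>i. q i - a i)"
  define \<phi> where "\<phi> = (\<lambda>x. max 0 (1 - dN m x a / r))"
  define \<psi> where "\<psi> = (\<lambda>x i. x i + \<phi> x * d i)"
  have Nd: "Nm m d < r" using qa by (simp add: d_def dN_def)
  define k where "k = 1 - Nm m d / r"
  have k: "k > 0" using Nd r by (simp add: k_def field_simps)
  have dE: "\<And>i. i \<ge> m \<Longrightarrow> d i = 0" using aE qE by (simp add: d_def topspace_Euclidean_space)
  have \<psi>E: "\<psi> x \<in> E" if "x \<in> E" for x
    using that dE by (simp add: E_def topspace_Euclidean_space \<psi>_def)
  have \<phi>L: "\<bar>\<phi> x - \<phi> y\<bar> \<le> dN m x y / r" for x y
  proof -
    have "\<bar>dN m x a - dN m y a\<bar> \<le> dN m x y"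
      using dN_tri[of m x a y] dN_tri[of m y a x] dN_sym[of m x y] by linarith
    moreover have "(1 - dN m x a / r) - (1 - dN m y a / r) = (dN m y a - dN m x a) / r"
      by (simp add: diff_divide_distrib)
    ultimately have "\<bar>(1 - dN m x a / r) - (1 - dN m y a / r)\<bar> \<le> dN m x y / r"
      using r by (simp add: abs_minus_commute divide_right_mono)
    then show ?thesis unfolding \<phi>_def by (smt (verit))
  qed
  have diff: "(\<lambda>i. \<psi> x i - \<psi> y i) = (\<lambda>i. (x i - y i) + (\<phi> x - \<phi> y) * d i)" for x y
    by (auto simp: \<psi>_def algebra_simps)
  have up: "dN m (\<psi> x) (\<psi> y) \<le> 2 * dN m x y" for x y
  proof -
    have "dN m (\<psi> x) (\<psi> y) \<le> dN m x y + \<bar>\<phi> x - \<phi> y\<bar> * Nm m d"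
      unfolding dN_def diff using Nm_add[of m "\<lambda>i. x i - y i" "\<lambda>i. (\<phi> x - \<phi> y) * d i"] Nm_scale by simp
    also have "\<dots> \<le> dN m x y + dN m x y / r * r"
      using \<phi>L[of x y] Nd by (intro add_left_mono mult_mono) (auto simp: Nm_nonneg)
    also have "\<dots> = 2 * dN m x y" using r by simp
    finally show ?thesis .
  qed
  have low: "k * dN m x y \<le> dN m (\<psi> x) (\<psi> y)" for x y
  proof -
    have "(\<lambda>i. x i - y i) = (\<lambda>i. (\<psi> x i - \<psi> y i) + (- (\<phi> x - \<phi> y)) * d i)"
      by (auto simp: \<psi>_def algebra_simps)
    then have "dN m x y \<le> dN m (\<psi> x) (\<psi> y) + \<bar>\<phi> x - \<phi> y\<bar> * Nm m d"
      unfolding dN_def using Nm_add[of m "\<lambda>i. \<psi> x i - \<psi> y i" "\<lambda>i. (- (\<phi> x - \<phi> y)) * d i"] Nm_scale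
      by (metis abs_minus_cancel)
    also have "\<dots> \<le> dN m (\<psi> x) (\<psi> y) + dN m x y / r * Nm m d"
      using \<phi>L[of x y] by (intro add_left_mono mult_right_mono) (auto simp: Nm_nonneg)
    finally show ?thesis using r by (simp add: k_def field_simps)
  qed
  have inj: "inj_on \<psi> E"
  proof (rule inj_onI)
    fix x y assume xy: "x \<in> E" "y \<in> E" "\<psi> x = \<psi> y"
    then have "k * dN m x y \<le> 0" using low[of x y] by (simp add: dN_self)
    then have "dN m x y = 0" using k dN_nonneg[of m x y] by (simp add: mult_le_0_iff)
    then have "\<forall>i<m. x i = y i" using dN_comp[of _ m x y] by fastforce
    then show "x = y" using xy(1,2) by (auto simp: E_def topspace_Euclidean_space intro!: ext) (metis not_less)
  qed
  have fix\<psi>: "\<psi> x = x" if "dN m x a \<ge> r" for x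
  proof -
    have "\<phi> x = 0" using that r by (simp add: \<phi>_def)
    then show ?thesis by (simp add: \<psi>_def)
  qed
  have surj: "\<exists>x\<in>E. \<psi> x = y" if yE: "y \<in> E" for y
  proof (cases "dN m y a \<ge> r")
    case True then show ?thesis using fix\<psi> yE by blast
  next
    case False
    define h where "h = (\<lambda>t. dN m (\<lambda>i. y i - (1 - t/r) * d i) a - t)"
    have "h r \<le> 0" using False using r by (simp add: h_def)
    moreover have "0 \<le> h 0" by (simp add: h_def dN_nonneg)
    moreover have "continuous_on {0..r} h"
      unfolding h_def dN_def Nm_def by (intro continuous_intros) (use r in auto)
    ultimately obtain t where t: "0 \<le> t" "t \<le> r" "h t = 0"
      using IVT2'[of h r 0 0] r by auto
    define x where "x = (\<lambda>i. y i - (1 - t/r) * d i)"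
    have "dN m x a = t" using t(3) by (simp add: h_def x_def)
    then have "\<phi> x = 1 - t/r" using t r by (simp add: \<phi>_def)
    then have "\<psi> x = y" by (simp add: \<psi>_def x_def)
    moreover have "x \<in> E" using yE dE by (simp add: x_def E_def topspace_Euclidean_space)
    ultimately show ?thesis by blast
  qed
  define \<psi>' where "\<psi>' = inv_into E \<psi>"
  have yim: "y \<in> \<psi> ` E" if "y \<in> E" for y using surj[OF that] by auto
  have \<psi>'E: "\<psi>' y \<in> E" if "y \<in> E" for y
    using yim[OF that] unfolding \<psi>'_def by (rule inv_into_into)
  have \<psi>\<psi>': "\<psi> (\<psi>' y) = y" if "y \<in> E" for y
    using yim[OF that] unfolding \<psi>'_def by (rule f_inv_into_f)
  have \<psi>'\<psi>: "\<psi>' (\<psi> x) = x" if "x \<in> E" for x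
    using inj that by (simp add: \<psi>'_def)
  have c1: "continuous_map (Euclidean_space m) (Euclidean_space m) \<psi>"
    by (rule lipschitz_cm[of _ _ 2]) (use \<psi>E up in \<open>auto simp: E_def\<close>)
  have c2: "continuous_map (Euclidean_space m) (Euclidean_space m) \<psi>'"
  proof (rule lipschitz_cm[of _ _ "1/k"])
    show "\<psi>' x \<in> topspace (Euclidean_space m)" if "x \<in> topspace (Euclidean_space m)" for x
      using \<psi>'E that by (simp add: E_def)
    show "0 < 1/k" using k by simp
    fix x y assume xy: "x \<in> topspace (Euclidean_space m)" "y \<in> topspace (Euclidean_space m)"
    have "k * dN m (\<psi>' x) (\<psi>' y) \<le> dN m x y"
      using low[of "\<psi>' x" "\<psi>' y"] \<psi>\<psi>' xy by (simp add: E_def)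
    then show "dN m (\<psi>' x) (\<psi>' y) \<le> 1 / k * dN m x y" using k by (simp add: field_simps)
  qed
  have "homeomorphic_maps (Euclidean_space m) (Euclidean_space m) \<psi> \<psi>'"
    unfolding homeomorphic_maps_def using c1 c2 \<psi>\<psi>' \<psi>'\<psi> by (simp add: E_def)
  moreover have "\<psi> a = q"
    by (simp add: \<psi>_def \<phi>_def d_def dN_self)
  moreover have "\<psi> x = x \<and> \<psi>' x = x" if "x \<in> E" "dN m x a \<ge> r" for x
    using fix\<psi>[OF that(2)] \<psi>'\<psi>[OF that(1)] by simp
  ultimately show ?thesis by (auto simp: E_def)
qed



lemma cube_compact0:
  "r \<ge> 0 \<Longrightarrow> compactin (Euclidean_space m) {x\<in>topspace (Euclidean_space m). \<forall>i<m. \<bar>x i - a i\<bar> \<le> r}"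
  by (rule compact_cube)

lemma chart_homeo:
  assumes Haus: "Hausdorff_space M" and U: "openin M U"
    and fg: "homeomorphic_maps (subtopology M U) (Euclidean_space m) f g"
    and \<psi>: "homeomorphic_maps (Euclidean_space m) (Euclidean_space m) \<psi> \<psi>'"
    and L: "compactin (Euclidean_space m) L"
    and fx: "\<And>x. x \<in> topspace (Euclidean_space m) - L \<Longrightarrow> \<psi> x = x \<and> \<psi>' x = x"
  shows "homeomorphic_maps M M (\<lambda>x. if x \<in> U then g (\<psi> (f x)) else x)
                               (\<lambda>x. if x \<in> U then g (\<psi>' (f x)) else x)"
proof -
  have UM: "U \<subseteq> topspace M" using U openin_subset by blast
  have tU: "topspace (subtopology M U) = U" using UM by auto
  have fc: "continuous_map (subtopology M U) (Euclidean_space m) f"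
    and gc: "continuous_map (Euclidean_space m) (subtopology M U) g"
    and gf: "\<And>x. x \<in> U \<Longrightarrow> g (f x) = x"
    and fg': "\<And>y. y \<in> topspace (Euclidean_space m) \<Longrightarrow> f (g y) = y"
    using fg tU by (auto simp: homeomorphic_maps_def)
  have fE: "\<And>x. x \<in> U \<Longrightarrow> f x \<in> topspace (Euclidean_space m)"
    using fc tU by (auto simp: continuous_map_def)
  have gU: "\<And>y. y \<in> topspace (Euclidean_space m) \<Longrightarrow> g y \<in> U"
    using gc tU by (auto simp: continuous_map_def)
  have gcM: "continuous_map (Euclidean_space m) M g"
    using gc by (rule continuous_map_into_fulltopology)
  have cl: "closedin M (g ` L)"
    using compactin_imp_closedin[OF Haus image_compactin[OF L gcM]] .
  have main: "continuous_map M M (\<lambda>x. if x \<in> U then g (hh (f x)) else x)"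
    if hh: "continuous_map (Euclidean_space m) (Euclidean_space m) hh"
       and hfix: "\<And>x. x \<in> topspace (Euclidean_space m) - L \<Longrightarrow> hh x = x" for hh
  proof (rule pasting_lemma[where I="{True,False}" and T="\<lambda>b. if b then U else topspace M - g ` L"
        and f="\<lambda>b. if b then (\<lambda>x. g (hh (f x))) else (\<lambda>x. x)"])
    show "openin M (if b then U else topspace M - g ` L)" if "b \<in> {True, False}" for b
      using U cl by auto
    show "continuous_map (subtopology M (if b then U else topspace M - g ` L)) M
            (if b then (\<lambda>x. g (hh (f x))) else (\<lambda>x. x))" if "b \<in> {True, False}" for b
    proof (cases b)
      case True
      have "continuous_map (subtopology M U) M (g \<circ> (hh \<circ> f))"
        by (rule continuous_map_compose[OF continuous_map_compose[OF fc hh] gcM])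
      then show ?thesis using True by (simp add: o_def)
    next
      case False
      then show ?thesis by (simp add: continuous_map_from_subtopology)
    qed
    have ov: "g (hh (f x)) = x" if "x \<in> U" "x \<notin> g ` L" for x
    proof -
      have "f x \<notin> L" using that gf by (metis image_eqI)
      then have "hh (f x) = f x" using hfix fE that by auto
      then show ?thesis using gf that by simp
    qed
    show "(if i then (\<lambda>x. g (hh (f x))) else (\<lambda>x. x)) x = (if j then (\<lambda>x. g (hh (f x))) else (\<lambda>x. x)) x"
      if "i \<in> {True, False}" "j \<in> {True, False}"
        "x \<in> topspace M \<inter> (if i then U else topspace M - g ` L) \<inter> (if j then U else topspace M - g ` L)"
      for i j x
      using that ov by (cases i; cases j) auto
    show "\<exists>j. j \<in> {True, False} \<and> x \<in> (if j then U else topspace M - g ` L) \<and>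
              (if x \<in> U then g (hh (f x)) else x) = (if j then (\<lambda>x. g (hh (f x))) else (\<lambda>x. x)) x"
      if "x \<in> topspace M" for x
    proof (cases "x \<in> U")
      case True then show ?thesis by (intro exI[of _ True]) auto
    next
      case False
      have "x \<notin> g ` L"
      proof
        assume "x \<in> g ` L"
        then obtain y where "y \<in> L" "x = g y" by auto
        then have "y \<in> topspace (Euclidean_space m)" using L compactin_subset_topspace by blast
        then show False using gU \<open>x = g y\<close> False by auto
      qed
      then show ?thesis using False that by (intro exI[of _ False]) auto
    qed
  qed
  have \<psi>c: "continuous_map (Euclidean_space m) (Euclidean_space m) \<psi>"
    and \<psi>'c: "continuous_map (Euclidean_space m) (Euclidean_space m) \<psi>'"
    and \<psi>\<psi>: "\<And>x. x \<in> topspace (Euclidean_space m) \<Longrightarrow> \<psi>' (\<psi> x) = x"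
    and \<psi>\<psi>': "\<And>x. x \<in> topspace (Euclidean_space m) \<Longrightarrow> \<psi> (\<psi>' x) = x"
    using \<psi> by (auto simp: homeomorphic_maps_def)
  have \<psi>E: "\<And>x. x \<in> topspace (Euclidean_space m) \<Longrightarrow> \<psi> x \<in> topspace (Euclidean_space m)"
   and \<psi>'E: "\<And>x. x \<in> topspace (Euclidean_space m) \<Longrightarrow> \<psi>' x \<in> topspace (Euclidean_space m)"
    using \<psi>c \<psi>'c by (auto simp: continuous_map_def)
  show ?thesis
    unfolding homeomorphic_maps_def
  proof (intro conjI ballI)
    show "continuous_map M M (\<lambda>x. if x \<in> U then g (\<psi> (f x)) else x)"
      using main[OF \<psi>c] fx by blast
    show "continuous_map M M (\<lambda>x. if x \<in> U then g (\<psi>' (f x)) else x)"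
      using main[OF \<psi>'c] fx by blast
    fix x assume "x \<in> topspace M"
    show "(if (if x \<in> U then g (\<psi> (f x)) else x) \<in> U then g (\<psi>' (f (if x \<in> U then g (\<psi> (f x)) else x)))
         else if x \<in> U then g (\<psi> (f x)) else x) = x"
      using gU fE \<psi>E fg' \<psi>\<psi> gf by auto
    show "(if (if x \<in> U then g (\<psi>' (f x)) else x) \<in> U then g (\<psi> (f (if x \<in> U then g (\<psi>' (f x)) else x)))
         else if x \<in> U then g (\<psi>' (f x)) else x) = x"
      using gU fE \<psi>'E fg' \<psi>\<psi>' gf by auto
  qed
qed

lemma local_move:
  assumes Haus: "Hausdorff_space M"
    and charts: "\<And>x. x \<in> topspace M \<Longrightarrow> \<exists>U. openin M U \<and> x \<in> U \<and> subtopology M U homeomorphic_space Euclidean_space m"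
    and G: "openin M G" and y: "y \<in> G"
  shows "\<exists>Ob. openin M Ob \<and> y \<in> Ob \<and> Ob \<subseteq> G \<and>
           (\<forall>z\<in>Ob. \<exists>\<phi> \<phi>'. homeomorphic_maps M M \<phi> \<phi>' \<and> \<phi> y = z \<and> (\<forall>x\<in>topspace M - G. \<phi> x = x))"
proof -
  have yM: "y \<in> topspace M" using G y openin_subset by blast
  obtain U where U: "openin M U" "y \<in> U" "subtopology M U homeomorphic_space Euclidean_space m"
    using charts[OF yM] by blast
  obtain f g where fg: "homeomorphic_maps (subtopology M U) (Euclidean_space m) f g"
    using U(3) by (auto simp: homeomorphic_space_def)
  have UM: "U \<subseteq> topspace M" using U openin_subset by blast
  have tU: "topspace (subtopology M U) = U" using UM by auto
  have fc: "continuous_map (subtopology M U) (Euclidean_space m) f"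
    and gf: "\<And>x. x \<in> U \<Longrightarrow> g (f x) = x"
    and fg': "\<And>y. y \<in> topspace (Euclidean_space m) \<Longrightarrow> f (g y) = y"
    using fg tU by (auto simp: homeomorphic_maps_def)
  have fE: "\<And>x. x \<in> U \<Longrightarrow> f x \<in> topspace (Euclidean_space m)"
    using fc tU by (auto simp: continuous_map_def)
  have fh: "homeomorphic_map (subtopology M U) (Euclidean_space m) f"
    using fg homeomorphic_map_maps by blast
  define V where "V = f ` (U \<inter> G)"
  have "openin (subtopology M U) (U \<inter> G)"
    using G by (simp add: openin_subtopology_Int2 inf_commute openin_subtopology) blast
  then have V: "openin (Euclidean_space m) V"
    unfolding V_def using homeomorphic_map_openness[OF fh, of "U \<inter> G"] tU UM by auto
  define a where "a = f y"
  have aV: "a \<in> V" using U y by (simp add: a_def V_def)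
  obtain \<rho> where \<rho>: "\<rho> > 0" "\<forall>x\<in>topspace (Euclidean_space m). (\<forall>i<m. \<bar>x i - a i\<bar> < \<rho>) \<longrightarrow> x \<in> V"
    using openin_cube[OF V aV] by blast
  define r where "r = \<rho> / 2"
  have r: "r > 0" "r < \<rho>" using \<rho> by (auto simp: r_def)
  define Ob where "Ob = {z \<in> topspace (subtopology M U). f z \<in> {x\<in>topspace (Euclidean_space m). dN m x a < r}}"
  have "openin (subtopology M U) Ob"
    unfolding Ob_def dN_def by (rule openin_continuous_map_preimage[OF fc openin_ball])
  then have Obo: "openin M Ob" using U(1) openin_trans_full by blast
  have ObU: "Ob \<subseteq> U" using tU by (auto simp: Ob_def)
  have yOb: "y \<in> Ob" using U r yM by (simp add: Ob_def a_def dN_self fE)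
  have inV: "x \<in> U \<inter> G" if "x \<in> U" "\<forall>i<m. \<bar>f x i - a i\<bar> < \<rho>" for x
  proof -
    have "f x \<in> V" using \<rho>(2) fE[OF that(1)] that(2) by blast
    then obtain w where w: "w \<in> U \<inter> G" "f x = f w" by (auto simp: V_def)
    have "x = g (f x)" using gf that(1) by simp
    also have "\<dots> = w" using w(2) gf[of w] w(1) by simp
    finally show ?thesis using w by simp
  qed
  have ObG: "Ob \<subseteq> G"
  proof
    fix z assume z: "z \<in> Ob"
    then have dz: "dN m (f z) a < r" by (simp add: Ob_def)
    have "\<bar>f z i - a i\<bar> < \<rho>" if "i < m" for i
      using dN_comp[OF that, of "f z" a] dz r(2) by linarith
    then have "\<forall>i<m. \<bar>f z i - a i\<bar> < \<rho>" by blast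
    then show "z \<in> G" using inV z ObU by auto
  qed
  have "\<exists>\<phi> \<phi>'. homeomorphic_maps M M \<phi> \<phi>' \<and> \<phi> y = z \<and> (\<forall>x\<in>topspace M - G. \<phi> x = x)" if z: "z \<in> Ob" for z
  proof -
    define q where "q = f z"
    have qE: "q \<in> topspace (Euclidean_space m)" using z ObU fE by (auto simp: q_def)
    have qa: "dN m q a < r" using z by (simp add: Ob_def q_def)
    obtain \<psi> \<psi>' where \<psi>: "homeomorphic_maps (Euclidean_space m) (Euclidean_space m) \<psi> \<psi>'" "\<psi> a = q"
      "\<forall>x\<in>topspace (Euclidean_space m). dN m x a \<ge> r \<longrightarrow> \<psi> x = x \<and> \<psi>' x = x"
      using move_pt[OF fE[OF U(2), folded a_def] qE r(1) qa] by blast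
    define L where "L = {x\<in>topspace (Euclidean_space m). \<forall>i<m. \<bar>x i - a i\<bar> \<le> r}"
    have L: "compactin (Euclidean_space m) L" unfolding L_def using r by (intro compact_cube) auto
    have Lfix: "\<psi> x = x \<and> \<psi>' x = x" if "x \<in> topspace (Euclidean_space m) - L" for x
    proof -
      have "\<not> (\<forall>i<m. \<bar>x i - a i\<bar> \<le> r)" using that by (simp add: L_def)
      then obtain i where "i < m" "\<bar>x i - a i\<bar> > r" by (auto simp: not_le)
      then have "dN m x a \<ge> r" using dN_comp[of i m x a] by linarith
      then show ?thesis using \<psi>(3) that by auto
    qed
    define \<phi> where "\<phi> = (\<lambda>x. if x \<in> U then g (\<psi> (f x)) else x)"
    define \<phi>' where "\<phi>' = (\<lambda>x. if x \<in> U then g (\<psi>' (f x)) else x)"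
    have hm: "homeomorphic_maps M M \<phi> \<phi>'"
      unfolding \<phi>_def \<phi>'_def by (rule chart_homeo[OF Haus U(1) fg \<psi>(1) L Lfix])
    have "\<phi> y = z" using U(2) \<psi>(2) z ObU gf by (simp add: \<phi>_def a_def q_def subset_iff)
    moreover have "\<phi> x = x" if "x \<in> topspace M - G" for x
    proof (cases "x \<in> U")
      case True
      have "f x \<notin> L"
      proof
        assume "f x \<in> L"
        then have "\<forall>i<m. \<bar>f x i - a i\<bar> < \<rho>" using r by (fastforce simp: L_def)
        then show False using inV True that by auto
      qed
      then have "\<psi> (f x) = f x" using Lfix fE True by auto
      then show ?thesis using True gf by (simp add: \<phi>_def)
    qed (simp add: \<phi>_def)
    ultimately show ?thesis using hm by blast
  qed
  then show ?thesis using Obo yOb ObG by blast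
qed



lemma step:
  assumes Haus: "Hausdorff_space M"
    and charts: "\<And>x. x \<in> topspace M \<Longrightarrow> \<exists>U. openin M U \<and> x \<in> U \<and> subtopology M U homeomorphic_space Euclidean_space m"
    and conn: "connected_space M"
    and U0: "openin M U0" and fg0: "homeomorphic_maps (subtopology M U0) (Euclidean_space m) f0 g0"
    and \<Phi>: "homeomorphic_maps M M \<Phi> \<Phi>'" and r: "r \<ge> 0" and c: "c \<in> topspace M"
  shows "\<exists>\<Psi> \<Psi>' r'. homeomorphic_maps M M \<Psi> \<Psi>' \<and> r' \<ge> r + 1 \<and>
           (\<forall>x\<in>topspace (Euclidean_space m). Nm m x \<le> r \<longrightarrow> \<Psi> (g0 x) = \<Phi> (g0 x)) \<and>
           (\<exists>x\<in>topspace (Euclidean_space m). Nm m x < r' \<and> \<Psi> (g0 x) = c)"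
proof -
  define ES where "ES = topspace (Euclidean_space m)"
  have U0M: "U0 \<subseteq> topspace M" using U0 openin_subset by blast
  have tU: "topspace (subtopology M U0) = U0" using U0M by auto
  have g0c: "continuous_map (Euclidean_space m) (subtopology M U0) g0"
    and f0c: "continuous_map (subtopology M U0) (Euclidean_space m) f0"
    and gf: "\<And>x. x \<in> U0 \<Longrightarrow> g0 (f0 x) = x"
    using fg0 tU by (auto simp: homeomorphic_maps_def)
  have g0cM: "continuous_map (Euclidean_space m) M g0"
    using g0c by (rule continuous_map_into_fulltopology)
  have g0U: "g0 ` ES = U0"
  proof
    show "g0 ` ES \<subseteq> U0" using g0c tU by (auto simp: continuous_map_def ES_def)
    show "U0 \<subseteq> g0 ` ES"
    proof
      fix x assume "x \<in> U0"
      then have "f0 x \<in> ES" "g0 (f0 x) = x" using f0c tU gf by (auto simp: continuous_map_def ES_def)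
      then show "x \<in> g0 ` ES" by force
    qed
  qed
  have \<Phi>c: "continuous_map M M \<Phi>" and \<Phi>h: "homeomorphic_map M M \<Phi>"
    using \<Phi> by (auto simp: homeomorphic_maps_def homeomorphic_map_maps)
  define B where "B = {x\<in>ES. Nm m x \<le> r}"
  have "closedin (Euclidean_space m) {x \<in> topspace (Euclidean_space m). Nm m (\<lambda>i. x i - 0) \<in> {..r}}"
    by (rule closedin_continuous_map_preimage[OF cm_Nm]) simp
  moreover have "{x \<in> topspace (Euclidean_space m). Nm m (\<lambda>i. x i - 0) \<in> {..r}} = B"
    unfolding B_def ES_def by auto
  ultimately have Bcl: "closedin (Euclidean_space m) B" by simp
  have Bsub: "B \<subseteq> {x\<in>topspace (Euclidean_space m). \<forall>i<m. \<bar>x i - 0\<bar> \<le> r}"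
  proof
    fix x assume x: "x \<in> B"
    have "\<bar>x i - 0\<bar> \<le> r" if "i < m" for i
      using Nm_comp[OF that, of x] x by (simp add: B_def)
    then show "x \<in> {x\<in>topspace (Euclidean_space m). \<forall>i<m. \<bar>x i - 0\<bar> \<le> r}"
      using x by (simp add: B_def ES_def)
  qed
  have Bc: "compactin (Euclidean_space m) B"
    using closed_compactin[OF compact_cube[OF r] Bsub Bcl] .
  define K where "K = (\<Phi> \<circ> g0) ` B"
  have Kc: "compactin M K" unfolding K_def
    by (rule image_compactin[OF Bc continuous_map_compose[OF g0cM \<Phi>c]])
  have Kcl: "closedin M K" using compactin_imp_closedin[OF Haus Kc] .
  have KM: "K \<subseteq> topspace M" using Kcl closedin_subset by blast
  have z0: "(\<lambda>_. 0) \<in> B" using r by (simp add: B_def ES_def topspace_Euclidean_space Nm_def)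
  then have Kne: "K \<noteq> {}" by (auto simp: K_def)
  define U1 where "U1 = \<Phi> ` U0"
  have U1o: "openin M U1" unfolding U1_def using homeomorphic_map_openness[OF \<Phi>h U0M] U0 by simp
  have KU1: "K \<subseteq> U1" unfolding K_def U1_def using g0U by (auto simp: B_def)
  show ?thesis
  proof (cases "c \<in> K")
    case True
    then obtain x where x: "x \<in> B" "c = \<Phi> (g0 x)" by (auto simp: K_def)
    show ?thesis
      by (rule exI[of _ \<Phi>], rule exI[of _ \<Phi>'], rule exI[of _ "r+1"]) (use \<Phi> x in \<open>auto simp: B_def ES_def intro!: bexI[of _ x]\<close>)
  next
    case False
    define G where "G = topspace M - K"
    have Go: "openin M G" using Kcl by (simp add: G_def openin_diff)
    have MG: "topspace M - G = K" using KM by (auto simp: G_def)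
    define rel where "rel = (\<lambda>p q. \<exists>\<phi> \<phi>'. homeomorphic_maps M M \<phi> \<phi>' \<and> \<phi> p = q \<and> (\<forall>x\<in>K. \<phi> x = x))"
    have rtrans: "rel p s" if pq: "rel p q" and qs: "rel q s" for p q s
    proof -
      obtain \<phi>1 \<phi>1' where 1: "homeomorphic_maps M M \<phi>1 \<phi>1'" "\<phi>1 p = q" "\<forall>x\<in>K. \<phi>1 x = x"
        using pq unfolding rel_def by blast
      obtain \<phi>2 \<phi>2' where 2: "homeomorphic_maps M M \<phi>2 \<phi>2'" "\<phi>2 q = s" "\<forall>x\<in>K. \<phi>2 x = x"
        using qs unfolding rel_def by blast
      have "homeomorphic_maps M M (\<phi>2 \<circ> \<phi>1) (\<phi>1' \<circ> \<phi>2')"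
        using homeomorphic_maps_compose 1(1) 2(1) by blast
      then show ?thesis unfolding rel_def using 1 2 by (intro exI[of _ "\<phi>2 \<circ> \<phi>1"] exI[of _ "\<phi>1' \<circ> \<phi>2'"]) auto
    qed
    have rsym: "rel q p" if pq: "rel p q" and pM: "p \<in> topspace M" for p q
    proof -
      obtain \<phi> \<phi>' where 1: "homeomorphic_maps M M \<phi> \<phi>'" "\<phi> p = q" "\<forall>x\<in>K. \<phi> x = x"
        using pq unfolding rel_def by blast
      have inv: "\<And>x. x \<in> topspace M \<Longrightarrow> \<phi>' (\<phi> x) = x" using 1(1) by (auto simp: homeomorphic_maps_def)
      have "homeomorphic_maps M M \<phi>' \<phi>" using 1(1) homeomorphic_maps_sym by blast
      moreover have "\<phi>' q = p" using inv[OF pM] 1(2) by simp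
      moreover have "\<forall>x\<in>K. \<phi>' x = x" using inv 1(3) KM by (metis subsetD)
      ultimately show ?thesis unfolding rel_def by blast
    qed
    have loc: "\<exists>Ob. openin M Ob \<and> q \<in> Ob \<and> Ob \<subseteq> G \<and> (\<forall>z\<in>Ob. rel q z)" if qG: "q \<in> G" for q
    proof -
      obtain Ob where "openin M Ob" "q \<in> Ob" "Ob \<subseteq> G"
        "\<forall>z\<in>Ob. \<exists>\<phi> \<phi>'. homeomorphic_maps M M \<phi> \<phi>' \<and> \<phi> q = z \<and> (\<forall>x\<in>topspace M - G. \<phi> x = x)"
        using local_move[OF Haus charts Go qG] by blast
      then show ?thesis unfolding rel_def MG by blast
    qed
    define A where "A = {q\<in>G. rel c q}"
    have GM: "G \<subseteq> topspace M" by (auto simp: G_def)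
    have Ao: "openin M A"
    proof (subst openin_subopen, intro ballI)
      fix q assume q: "q \<in> A"
      obtain Ob where Ob: "openin M Ob" "q \<in> Ob" "Ob \<subseteq> G" "\<forall>z\<in>Ob. rel q z" using loc[of q] q by (simp add: A_def) blast
      have "Ob \<subseteq> A"
      proof
        fix z assume z: "z \<in> Ob"
        have "rel c q" using q by (simp add: A_def)
        then have "rel c z" using rtrans Ob(4) z by blast
        then show "z \<in> A" using Ob(3) z by (auto simp: A_def)
      qed
      then show "\<exists>T. openin M T \<and> q \<in> T \<and> T \<subseteq> A" using Ob by blast
    qed
    have GAo: "openin M (G - A)"
    proof (subst openin_subopen, intro ballI)
      fix q assume q: "q \<in> G - A"
      obtain Ob where Ob: "openin M Ob" "q \<in> Ob" "Ob \<subseteq> G" "\<forall>z\<in>Ob. rel q z" using loc[of q] q by blast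
      have "Ob \<subseteq> G - A"
      proof
        fix z assume z: "z \<in> Ob"
        show "z \<in> G - A"
        proof
          show "z \<in> G" using z Ob by auto
          show "z \<notin> A"
          proof
            assume "z \<in> A"
            then have "rel c z" by (simp add: A_def)
            moreover have "rel z q" using rsym[of q z] Ob z q GM by auto
            ultimately have "rel c q" by (rule rtrans)
            then show False using q by (simp add: A_def)
          qed
        qed
      qed
      then show "\<exists>T. openin M T \<and> q \<in> T \<and> T \<subseteq> G - A" using Ob by blast
    qed
    have cG: "c \<in> G" using c False by (simp add: G_def)
    have "rel c c" unfolding rel_def
      by (rule exI[of _ id], rule exI[of _ id]) (simp add: homeomorphic_maps_id)
    then have cA: "c \<in> A" using cG by (simp add: A_def)
    have "A \<inter> U1 \<noteq> {}"
    proof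
      assume dis: "A \<inter> U1 = {}"
      have "topspace M - A = U1 \<union> (G - A)"
        using dis KU1 U1o openin_subset[OF U1o] by (auto simp: G_def)
      then have "closedin M A" using U1o GAo Ao
        by (metis closedin_def openin_Un openin_subset)
      then have "A = {} \<or> A = topspace M" using Ao conn connected_space_clopen_in by blast
      moreover have "A \<noteq> topspace M" using Kne KM by (auto simp: A_def G_def)
      ultimately show False using cA by blast
    qed
    then obtain p where p: "p \<in> A" "p \<in> U1" by blast
    then obtain y where y: "y \<in> ES" "p = \<Phi> (g0 y)" using g0U by (auto simp: U1_def)
    have "rel p c" using rsym[of c p] p c by (simp add: A_def)
    then obtain \<psi> \<psi>' where \<psi>: "homeomorphic_maps M M \<psi> \<psi>'" "\<psi> p = c" "\<forall>x\<in>K. \<psi> x = x"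
      by (auto simp: rel_def)
    have hm: "homeomorphic_maps M M (\<psi> \<circ> \<Phi>) (\<Phi>' \<circ> \<psi>')"
      using homeomorphic_maps_compose \<Phi> \<psi>(1) by blast
    show ?thesis
    proof (intro exI conjI)
      show "homeomorphic_maps M M (\<psi> \<circ> \<Phi>) (\<Phi>' \<circ> \<psi>')" by (rule hm)
      show "r + 1 \<le> max (r+1) (Nm m y + 1)" by simp
      show "\<forall>x\<in>topspace (Euclidean_space m). Nm m x \<le> r \<longrightarrow> (\<psi> \<circ> \<Phi>) (g0 x) = \<Phi> (g0 x)"
        using \<psi>(3) by (auto simp: K_def B_def ES_def)
      show "\<exists>x\<in>topspace (Euclidean_space m). Nm m x < max (r+1) (Nm m y + 1) \<and> (\<psi> \<circ> \<Phi>) (g0 x) = c"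
        using y \<psi>(2) by (auto simp: ES_def intro!: bexI[of _ y])
    qed
  qed
qed



lemma openin_ball0: "openin (Euclidean_space m) {x\<in>topspace (Euclidean_space m). Nm m x < r}"
  using openin_ball[of m "\<lambda>_. 0" r] by simp

lemma real_nat_ceiling_ge: "(y::real) \<le> real (nat \<lceil>y\<rceil>)"
proof (cases "\<lceil>y\<rceil> \<ge> 0")
  case True
  then have "real (nat \<lceil>y\<rceil>) = of_int \<lceil>y\<rceil>" by simp
  then show ?thesis using le_of_int_ceiling[of y] by linarith
next
  case False
  then have "(of_int \<lceil>y\<rceil> :: real) < 0" by simp
  moreover have "(0::real) \<le> real (nat \<lceil>y\<rceil>)" by simp
  ultimately show ?thesis using le_of_int_ceiling[of y] by linarith
qed

lemma countable_cell:
  assumes Haus: "Hausdorff_space M"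
    and charts: "\<And>x. x \<in> topspace M \<Longrightarrow> \<exists>U. openin M U \<and> x \<in> U \<and> subtopology M U homeomorphic_space Euclidean_space m"
    and conn: "connected_space M" and ne: "topspace M \<noteq> {}"
    and C: "countable C" "C \<subseteq> topspace M"
  shows "\<exists>W. openin M W \<and> C \<subseteq> W \<and> subtopology M W homeomorphic_space Euclidean_space m"
proof -
  define ES where "ES = topspace (Euclidean_space m)"
  obtain c :: "nat \<Rightarrow> 'a" where c: "C \<subseteq> range c" "range c \<subseteq> topspace M"
  proof (cases "C = {}")
    case True
    obtain x0 where "x0 \<in> topspace M" using ne by blast
    then show ?thesis using that[of "\<lambda>_. x0"] True by auto
  next
    case False
    then show ?thesis using that[of "from_nat_into C"] C by simp
  qed
  obtain U0 where U0: "openin M U0" "c 0 \<in> U0" "subtopology M U0 homeomorphic_space Euclidean_space m"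
    using charts c by blast
  obtain f0 g0 where fg0: "homeomorphic_maps (subtopology M U0) (Euclidean_space m) f0 g0"
    using U0(3) by (auto simp: homeomorphic_space_def)
  have U0M: "U0 \<subseteq> topspace M" using U0 openin_subset by blast
  have tU: "topspace (subtopology M U0) = U0" using U0M by auto
  have g0c: "continuous_map (Euclidean_space m) (subtopology M U0) g0"
    and fg: "\<And>x. x \<in> ES \<Longrightarrow> f0 (g0 x) = x"
    using fg0 tU by (auto simp: homeomorphic_maps_def ES_def)
  have g0cM: "continuous_map (Euclidean_space m) M g0"
    using g0c by (rule continuous_map_into_fulltopology)
  have g0M: "g0 x \<in> topspace M" if "x \<in> ES" for x
    using g0cM that by (auto simp: continuous_map_def ES_def)
  have g0h: "homeomorphic_map (Euclidean_space m) (subtopology M U0) g0"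
    using fg0 homeomorphic_map_maps homeomorphic_maps_sym by blast
  have g0open: "openin M (g0 ` S)" if "openin (Euclidean_space m) S" for S
  proof -
    have "S \<subseteq> topspace (Euclidean_space m)" using that openin_subset by blast
    then have "openin (subtopology M U0) (g0 ` S)" using homeomorphic_map_openness[OF g0h] that by blast
    then show ?thesis using U0(1) openin_trans_full by blast
  qed
  define nxt where "nxt = (\<lambda>(s::('a\<Rightarrow>'a) \<times> ('a\<Rightarrow>'a) \<times> real) p. SOME t::('a\<Rightarrow>'a) \<times> ('a\<Rightarrow>'a) \<times> real.
      homeomorphic_maps M M (fst t) (fst (snd t)) \<and> snd (snd t) \<ge> snd (snd s) + 1 \<and>
      (\<forall>x\<in>ES. Nm m x \<le> snd (snd s) \<longrightarrow> fst t (g0 x) = fst s (g0 x)) \<and>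
      (\<exists>x\<in>ES. Nm m x < snd (snd t) \<and> fst t (g0 x) = p))"
  define S where "S = rec_nat (id, id, 0) (\<lambda>n s. nxt s (c n))"
  have S0: "S 0 = (id, id, 0)" by (simp add: S_def)
  have SS: "S (Suc n) = nxt (S n) (c n)" for n by (simp add: S_def)
  define \<Phi> where "\<Phi> n = fst (S n)" for n
  define \<Phi>' where "\<Phi>' n = fst (snd (S n))" for n
  define rr where "rr n = snd (snd (S n))" for n
  have nxtP: "homeomorphic_maps M M (\<Phi> (Suc n)) (\<Phi>' (Suc n)) \<and> rr (Suc n) \<ge> rr n + 1 \<and>
      (\<forall>x\<in>ES. Nm m x \<le> rr n \<longrightarrow> \<Phi> (Suc n) (g0 x) = \<Phi> n (g0 x)) \<and>
      (\<exists>x\<in>ES. Nm m x < rr (Suc n) \<and> \<Phi> (Suc n) (g0 x) = c n)"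
    if hm0: "homeomorphic_maps M M (\<Phi> n) (\<Phi>' n)" and r0: "rr n \<ge> 0" for n
  proof -
    obtain \<Psi> \<Psi>' r' where st: "homeomorphic_maps M M \<Psi> \<Psi>'" "r' \<ge> rr n + 1"
      "\<forall>x\<in>topspace (Euclidean_space m). Nm m x \<le> rr n \<longrightarrow> \<Psi> (g0 x) = \<Phi> n (g0 x)"
      "\<exists>x\<in>topspace (Euclidean_space m). Nm m x < r' \<and> \<Psi> (g0 x) = c n"
      using step[OF Haus charts conn U0(1) fg0 hm0 r0, of "c n"] c by blast
    have "\<exists>t::('a\<Rightarrow>'a) \<times> ('a\<Rightarrow>'a) \<times> real.
      homeomorphic_maps M M (fst t) (fst (snd t)) \<and> snd (snd t) \<ge> snd (snd (S n)) + 1 \<and>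
      (\<forall>x\<in>ES. Nm m x \<le> snd (snd (S n)) \<longrightarrow> fst t (g0 x) = fst (S n) (g0 x)) \<and>
      (\<exists>x\<in>ES. Nm m x < snd (snd t) \<and> fst t (g0 x) = c n)"
      by (rule exI[of _ "(\<Psi>, \<Psi>', r')"]) (use st in \<open>simp add: ES_def rr_def \<Phi>_def\<close>)
    from someI_ex[OF this] show ?thesis
      unfolding \<Phi>_def \<Phi>'_def rr_def SS nxt_def by (simp add: case_prod_beta)
  qed
  have inv: "homeomorphic_maps M M (\<Phi> n) (\<Phi>' n) \<and> rr n \<ge> real n" for n
  proof (induction n)
    case 0
    have "homeomorphic_maps M M id id" by (simp add: homeomorphic_maps_id)
    then show ?case by (simp add: \<Phi>_def \<Phi>'_def rr_def S0 id_def)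
  next
    case (Suc n)
    then have "rr n \<ge> 0" by (meson of_nat_0_le_iff order_trans)
    then show ?case using nxtP[of n] Suc by auto
  qed
  have hmn: "homeomorphic_maps M M (\<Phi> n) (\<Phi>' n)" for n using inv by blast
  have rrn: "rr n \<ge> real n" for n using inv by blast
  have P: "rr (Suc n) \<ge> rr n + 1"
    "\<And>x. x \<in> ES \<Longrightarrow> Nm m x \<le> rr n \<Longrightarrow> \<Phi> (Suc n) (g0 x) = \<Phi> n (g0 x)"
    "\<exists>x\<in>ES. Nm m x < rr (Suc n) \<and> \<Phi> (Suc n) (g0 x) = c n" for n
    using nxtP[OF hmn, of n] rrn[of n] by (auto intro: order_trans[OF of_nat_0_le_iff])
  have rmono: "rr n \<le> rr k" if "n \<le> k" for n k
    using that
  proof (induction k rule: dec_induct)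
    case (step k) then show ?case using P(1)[of k] by linarith
  qed simp
  have agree: "\<Phi> k (g0 x) = \<Phi> n (g0 x)" if "n \<le> k" "x \<in> ES" "Nm m x \<le> rr n" for n k x
    using that(1)
  proof (induction k rule: dec_induct)
    case (step k)
    have "Nm m x \<le> rr k" using that rmono[OF step(1)] by linarith
    then show ?case using P(2)[OF that(2)] step by simp
  qed simp
  define Nx where "Nx x = nat \<lceil>Nm m x\<rceil>" for x
  have Nx: "Nm m x \<le> rr (Nx x)" for x
  proof -
    have "Nm m x \<le> real (Nx x)" unfolding Nx_def by (rule real_nat_ceiling_ge)
    then show ?thesis using rrn[of "Nx x"] by linarith
  qed
  define h where "h x = \<Phi> (Nx x) (g0 x)" for x
  have hk: "h x = \<Phi> k (g0 x)" if "x \<in> ES" "Nm m x \<le> rr k" for x k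
  proof -
    have "\<Phi> (max k (Nx x)) (g0 x) = \<Phi> k (g0 x)" by (rule agree) (use that in auto)
    moreover have "\<Phi> (max k (Nx x)) (g0 x) = \<Phi> (Nx x) (g0 x)" by (rule agree) (use that Nx in auto)
    ultimately show ?thesis by (simp add: h_def)
  qed
  define Bn where "Bn n = {x\<in>ES. Nm m x < rr n}" for n
  have Bno: "openin (Euclidean_space m) (Bn n)" for n unfolding Bn_def ES_def by (rule openin_ball0)
  have \<Phi>h: "homeomorphic_map M M (\<Phi> n)" for n using hmn homeomorphic_map_maps by blast
  have \<Phi>c: "continuous_map M M (\<Phi> n)" for n using hmn by (auto simp: homeomorphic_maps_def)
  have imgopen: "openin M (\<Phi> n ` g0 ` T)" if "openin (Euclidean_space m) T" for n T
  proof -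
    have "g0 ` T \<subseteq> topspace M" using openin_subset[OF g0open[OF that]] .
    then show ?thesis using homeomorphic_map_openness[OF \<Phi>h] g0open[OF that] by blast
  qed
  have inBig: "x \<in> Bn (Nx x + 1)" if "x \<in> ES" for x
  proof -
    have "Nm m x \<le> real (Nx x)" unfolding Nx_def by (rule real_nat_ceiling_ge)
    then show ?thesis using rrn[of "Nx x + 1"] that by (simp add: Bn_def)
  qed
  have himg: "h ` T = (\<Union>n. \<Phi> n ` g0 ` (T \<inter> Bn n))" if "T \<subseteq> ES" for T
  proof
    show "h ` T \<subseteq> (\<Union>n. \<Phi> n ` g0 ` (T \<inter> Bn n))"
    proof
      fix y assume "y \<in> h ` T"
      then obtain x where x: "x \<in> T" "y = h x" by auto
      have xE: "x \<in> ES" using x that by auto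
      have "y = \<Phi> (Nx x + 1) (g0 x)" using hk[OF xE, of "Nx x + 1"] inBig[OF xE] x by (simp add: Bn_def)
      then show "y \<in> (\<Union>n. \<Phi> n ` g0 ` (T \<inter> Bn n))" using x inBig[OF xE] by blast
    qed
    show "(\<Union>n. \<Phi> n ` g0 ` (T \<inter> Bn n)) \<subseteq> h ` T"
    proof
      fix y assume "y \<in> (\<Union>n. \<Phi> n ` g0 ` (T \<inter> Bn n))"
      then obtain n x where x: "x \<in> T" "x \<in> Bn n" "y = \<Phi> n (g0 x)" by auto
      then have "y = h x" using hk[of x n] by (simp add: Bn_def)
      then show "y \<in> h ` T" using x by blast
    qed
  qed
  have hopen: "openin M (h ` T)" if "openin (Euclidean_space m) T" for T
  proof -
    have "T \<subseteq> ES" using openin_subset[OF that] by (simp add: ES_def)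
    then show ?thesis unfolding himg[OF \<open>T \<subseteq> ES\<close>]
      by (intro openin_Union) (use imgopen Bno that in blast)
  qed
  define W where "W = h ` ES"
  have Wo: "openin M W" unfolding W_def ES_def by (rule hopen) simp
  have hcont: "continuous_map (Euclidean_space m) M h"
    unfolding continuous_map_def
  proof (intro conjI allI impI)
    show "h \<in> topspace (Euclidean_space m) \<rightarrow> topspace M"
      using openin_subset[OF Wo] by (auto simp: W_def ES_def)
    fix V assume V: "openin M V"
    have "{x \<in> topspace (Euclidean_space m). h x \<in> V} =
          (\<Union>n. {x \<in> topspace (Euclidean_space m). (\<Phi> n \<circ> g0) x \<in> V} \<inter> Bn n)"
    proof (rule set_eqI, rule iffI)
      fix x assume x: "x \<in> {x \<in> topspace (Euclidean_space m). h x \<in> V}"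
      then have xE: "x \<in> ES" by (simp add: ES_def)
      have "h x = \<Phi> (Nx x + 1) (g0 x)" using hk[OF xE, of "Nx x + 1"] inBig[OF xE] by (simp add: Bn_def)
      then show "x \<in> (\<Union>n. {x \<in> topspace (Euclidean_space m). (\<Phi> n \<circ> g0) x \<in> V} \<inter> Bn n)"
        using x inBig[OF xE] by auto
    next
      fix x assume "x \<in> (\<Union>n. {x \<in> topspace (Euclidean_space m). (\<Phi> n \<circ> g0) x \<in> V} \<inter> Bn n)"
      then obtain n where n: "x \<in> ES" "\<Phi> n (g0 x) \<in> V" "x \<in> Bn n" by (auto simp: ES_def)
      then have "h x = \<Phi> n (g0 x)" using hk[of x n] by (simp add: Bn_def)
      then show "x \<in> {x \<in> topspace (Euclidean_space m). h x \<in> V}" using n by (simp add: ES_def)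
    qed
    moreover have "openin (Euclidean_space m) ({x \<in> topspace (Euclidean_space m). (\<Phi> n \<circ> g0) x \<in> V} \<inter> Bn n)" for n
      using openin_continuous_map_preimage[OF continuous_map_compose[OF g0cM \<Phi>c] V] Bno by blast
    ultimately show "openin (Euclidean_space m) {x \<in> topspace (Euclidean_space m). h x \<in> V}"
      by (metis (no_types, lifting) openin_Union imageE)
  qed
  have hinj: "inj_on h ES"
  proof (rule inj_onI)
    fix x y assume xy: "x \<in> ES" "y \<in> ES" "h x = h y"
    define k where "k = max (Nx x) (Nx y)"
    have "Nm m x \<le> rr k" using Nx[of x] rmono[of "Nx x" k] by (simp add: k_def)
    then have "h x = \<Phi> k (g0 x)" by (rule hk[OF xy(1)])
    moreover have "Nm m y \<le> rr k" using Nx[of y] rmono[of "Nx y" k] by (simp add: k_def)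
    then have "h y = \<Phi> k (g0 y)" by (rule hk[OF xy(2)])
    ultimately have "\<Phi> k (g0 x) = \<Phi> k (g0 y)" using xy by simp
    then have "\<Phi>' k (\<Phi> k (g0 x)) = \<Phi>' k (\<Phi> k (g0 y))" by simp
    then have "g0 x = g0 y" using hmn[of k] g0M xy by (simp add: homeomorphic_maps_def)
    then have "f0 (g0 x) = f0 (g0 y)" by simp
    then show "x = y" using fg xy by simp
  qed
  have CW: "C \<subseteq> W"
  proof
    fix p assume "p \<in> C"
    then obtain n where "p = c n" using c by auto
    moreover obtain x where "x \<in> ES" "Nm m x < rr (Suc n)" "\<Phi> (Suc n) (g0 x) = c n" using P(3)[of n] by blast
    ultimately have "p = h x" using hk[of x "Suc n"] by simp
    then show "p \<in> W" using \<open>x \<in> ES\<close> by (simp add: W_def)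
  qed
  have "homeomorphic_map (Euclidean_space m) (subtopology M W) h"
  proof (rule bijective_open_imp_homeomorphic_map)
    show "continuous_map (Euclidean_space m) (subtopology M W) h"
      using hcont by (rule continuous_map_into_subtopology) (auto simp: W_def ES_def)
    show "open_map (Euclidean_space m) (subtopology M W) h"
      unfolding open_map_def
    proof (intro allI impI)
      fix T assume T: "openin (Euclidean_space m) T"
      have "h ` T \<subseteq> W" using openin_subset[OF T] by (auto simp: W_def ES_def)
      then show "openin (subtopology M W) (h ` T)" using hopen[OF T] openin_open_subtopology[OF Wo] by blast
    qed
    show "h ` topspace (Euclidean_space m) = topspace (subtopology M W)"
      using openin_subset[OF Wo] by (auto simp: W_def ES_def)
    show "inj_on h (topspace (Euclidean_space m))" using hinj by (simp add: ES_def)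
  qed
  then have "Euclidean_space m homeomorphic_space subtopology M W"
    using homeomorphic_map_maps homeomorphic_space_def by blast
  then show ?thesis using Wo CW homeomorphic_space_sym by blast
qed

lemma arc_in_cell:
  assumes hm: "homeomorphic_maps (subtopology M W) (Euclidean_space m) F G"
    and WM: "W \<subseteq> topspace M" and x: "x \<in> W" and y: "y \<in> W" and xy: "x \<noteq> y"
  shows "\<exists>g. embedding_map (top_of_set {0..1::real}) M g \<and> g 0 = x \<and> g 1 = y"
proof -
  define ES where "ES = topspace (Euclidean_space m)"
  have tW: "topspace (subtopology M W) = W" using WM by auto
  have Fc: "continuous_map (subtopology M W) (Euclidean_space m) F"
    and Gc: "continuous_map (Euclidean_space m) (subtopology M W) G"
    and GF: "\<And>z. z \<in> W \<Longrightarrow> G (F z) = z"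
    using hm tW by (auto simp: homeomorphic_maps_def)
  have FE: "F z \<in> ES" if "z \<in> W" for z using Fc that tW by (auto simp: continuous_map_def ES_def)
  have GW: "G z \<in> W" if "z \<in> ES" for z using Gc that tW by (auto simp: continuous_map_def ES_def)
  define a where "a = F x"
  define b where "b = F y"
  have aE: "a \<in> ES" and bE: "b \<in> ES" using FE x y by (auto simp: a_def b_def)
  have "a \<noteq> b" using GF x y xy by (metis a_def b_def)
  then obtain k where k: "a k \<noteq> b k" by (meson ext)
  have km: "k < m"
  proof (rule ccontr)
    assume "\<not> k < m"
    then have "a k = 0" "b k = 0" using aE bE by (auto simp: ES_def topspace_Euclidean_space)
    then show False using k by simp
  qed
  define l where "l = (\<lambda>t::real. \<lambda>i. a i + t * (b i - a i))"
  define li where "li = (\<lambda>z::nat\<Rightarrow>real. (z k - a k) / (b k - a k))"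
  have lE: "l t \<in> ES" for t using aE bE by (simp add: l_def ES_def topspace_Euclidean_space)
  have lil: "li (l t) = t" for t using k by (simp add: l_def li_def)
  have lc: "continuous_map (top_of_set {0..1}) (Euclidean_space m) l"
    unfolding Euclidean_space_def continuous_map_in_subtopology
  proof
    show "continuous_map (top_of_set {0..1}) (powertop_real UNIV) l"
      unfolding continuous_map_componentwise_UNIV l_def
      by (simp add: continuous_intros)
    show "l \<in> topspace (top_of_set {0..1}) \<rightarrow> {x. \<forall>i\<ge>m. x i = 0}"
      using lE by (auto simp: ES_def topspace_Euclidean_space)
  qed
  have lic: "continuous_map (subtopology (Euclidean_space m) (l ` {0..1})) (top_of_set {0..1}) li"
    unfolding continuous_map_in_subtopology
  proof
    have "continuous_map (Euclidean_space m) euclideanreal li"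
      unfolding li_def by (intro continuous_intros cm_proj) (use k in auto)
    then show "continuous_map (subtopology (Euclidean_space m) (l ` {0..1})) euclideanreal li"
      by (rule continuous_map_from_subtopology)
    show "li \<in> topspace (subtopology (Euclidean_space m) (l ` {0..1})) \<rightarrow> {0..1}"
      using lil by auto
  qed
  have "homeomorphic_maps (top_of_set {0..1}) (subtopology (Euclidean_space m) (l ` {0..1})) l li"
    unfolding homeomorphic_maps_def
  proof (intro conjI ballI)
    show "continuous_map (top_of_set {0..1}) (subtopology (Euclidean_space m) (l ` {0..1})) l"
      using lc by (rule continuous_map_into_subtopology) auto
    show "continuous_map (subtopology (Euclidean_space m) (l ` {0..1})) (top_of_set {0..1}) li"
      by (rule lic)
    show "li (l t) = t" if "t \<in> topspace (top_of_set {0..1})" for t by (rule lil)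
    show "l (li z) = z" if "z \<in> topspace (subtopology (Euclidean_space m) (l ` {0..1}))" for z
      using that lil by auto
  qed
  then have le: "embedding_map (top_of_set {0..1}) (Euclidean_space m) l"
    unfolding embedding_map_def using homeomorphic_map_maps by fastforce
  have GES: "G ` ES = W"
  proof
    show "G ` ES \<subseteq> W" using GW by auto
    show "W \<subseteq> G ` ES" using GF FE by (metis image_eqI subsetI)
  qed
  have "homeomorphic_map (Euclidean_space m) (subtopology M W) G"
    using hm homeomorphic_map_maps homeomorphic_maps_sym by blast
  then have Ge: "embedding_map (Euclidean_space m) M G"
    unfolding embedding_map_def using GES by (simp add: ES_def)
  have "embedding_map (top_of_set {0..1}) M (G \<circ> l)"
    by (rule embedding_map_compose[OF le Ge])
  moreover have "(G \<circ> l) 0 = x" using GF x by (simp add: l_def a_def)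
  moreover have "(G \<circ> l) 1 = y"
  proof -
    have "l 1 = b" by (simp add: l_def)
    then show ?thesis using GF y by (simp add: b_def)
  qed
  ultimately show ?thesis by blast
qed

theorem proposition1:
  fixes M :: "'a topology" and m :: nat
  assumes "manifold_of_dim M m" and "topspace M \<noteq> {}"
  shows "(\<forall>C. countable C \<and> C \<subseteq> topspace M \<longrightarrow>
            (\<exists>U. openin M U \<and> C \<subseteq> U \<and>
                 subtopology M U homeomorphic_space Euclidean_space m))
      \<and> (\<forall>x \<in> topspace M. \<forall>y \<in> topspace M. x \<noteq> y \<longrightarrow> arc_joining M x y)"
proof -
  have conn: "connected_space M" and Haus: "Hausdorff_space M"
    and charts: "\<And>x. x \<in> topspace M \<Longrightarrow> \<exists>U. openin M U \<and> x \<in> U \<and> subtopology M U homeomorphic_space Euclidean_space m"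
    using assms(1) by (auto simp: manifold_of_dim_def)
  have P1: "\<forall>C. countable C \<and> C \<subseteq> topspace M \<longrightarrow>
            (\<exists>U. openin M U \<and> C \<subseteq> U \<and> subtopology M U homeomorphic_space Euclidean_space m)"
    using countable_cell[OF Haus charts conn assms(2)] by blast
  have P2: "arc_joining M x y" if xM: "x \<in> topspace M" and yM: "y \<in> topspace M" and xy: "x \<noteq> y" for x y
  proof -
    obtain W where W: "openin M W" "{x, y} \<subseteq> W" "subtopology M W homeomorphic_space Euclidean_space m"
    proof -
      have "countable {x, y} \<and> {x, y} \<subseteq> topspace M" using xM yM by simp
      then show ?thesis using P1 that by blast
    qed
    obtain F G where "homeomorphic_maps (subtopology M W) (Euclidean_space m) F G"
      using W(3) by (auto simp: homeomorphic_space_def)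
    moreover have "W \<subseteq> topspace M" using W(1) openin_subset by blast
    ultimately show ?thesis
      unfolding arc_joining_def using W(2) xy by (intro arc_in_cell) auto
  qed
  show ?thesis using P1 P2 by blast
qed

end
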